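(* Let $(g,b)$ be a magnetic system without conjugate points on a closed oriented surface $M$. For every $v\in SM$ there exist $c=c(v)>0$ and $r_0=r_0(v)$ such that if $J$ is a perpendicular Jacobi field along $\gamma_v$ with $J(r)=0$ for some $r\ge r_0$, then $|\dot J(0)|\le c\,|J(0)|$. (Equivalently, in the quotient bundle: if $\xi\in Q^b(v)$ satisfies $d\pi(\Phi^r\xi)=0$ for some $r\ge r_0$, then $\|K(\xi)\|\le c\|d\pi(\xi)\|$, where $\|d\pi(\xi)\|=|J_\xi(0)|$ and $\|K(\xi)\|=|\dot J_\xi(0)|$.)
   Context: Magnetic system $(g,b)$: Riemannian metric $g$ (Gaussian curvature $K^g$) and $b\in C^\infty(M)$; $\mathrm{i}$ = rotation by $\pi/2$ by the orientation. For $v\in SM$, $\gamma_v$ is the unit speed curve with $(\gamma_v(0),\dot\gamma_v(0))=v$ and $\frac{D\dot\gamma_v}{dt}=b(\gamma_v)\,\mathrm{i}\dot\gamma_v$; magnetic flow $\phi^t_{g,b}$ on $SM$ with generator $X^b$. Magnetic curvature $\mathbb K^{g,b}(x,v)=K^g(x)-d_xb(\mathrm{i}v)+b(x)^2$. Perpendicular Jacobi field along $\gamma_v$: $J:\mathbb R\to\mathbb R$ with $\ddot J+\mathbb K^{g,b}(\gamma_v(t),\dot\gamma_v(t))J=0$. Without conjugate points: for all $v$, every nontrivial perpendicular Jacobi field $J$ along $\gamma_v$ with $J(0)=0$ satisfies $J(t)\ne0$ for $t\ne0$. Quotient bundle $Q^b(v)=T_vSM/\mathbb RX^b(v)$ with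 flow $\Phi^t$ induced by $d\phi^t_{g,b}$; $\xi\in Q^b(v)$ corresponds bijectively to a perpendicular Jacobi field $J_\xi$ along $\gamma_v$, with $J_{\Phi^t\xi}(s)=J_\xi(t+s)$. *)

theory Defs
  imports "HOL-Analysis.Analysis"
begin

text \<open>Abstract model of a magnetic system on a closed oriented surface, reduced to
  the data the statement depends on:
  SM (unit tangent bundle, elements of type 'v), the magnetic flow phi on SM,
  and the magnetic curvature function KK on SM (KK v = K^g(x) - d_x b(i v) + b(x)^2).
  The perpendicular Jacobi equation along gamma_v has coefficient
  t maps to KK (phi t v), since (gamma_v(t), gamma_v'(t)) = phi t v.\<close>

definition is_flow :: "'v set \<Rightarrow> (real \<Rightarrow> 'v \<Rightarrow> 'v) \<Rightarrow> bool" where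
  "is_flow SM phi \<longleftrightarrow>
     (\<forall>v\<in>SM. phi 0 v = v) \<and>
     (\<forall>v\<in>SM. \<forall>t. phi t v \<in> SM) \<and>
     (\<forall>v\<in>SM. \<forall>s t. phi (s + t) v = phi s (phi t v))"

text \<open>Standing regularity coming from M closed and (g,b) smooth: the magnetic curvature
  is bounded on SM and continuous along every flow line.\<close>
definition magnetic_system :: "'v set \<Rightarrow> (real \<Rightarrow> 'v \<Rightarrow> 'v) \<Rightarrow> ('v \<Rightarrow> real) \<Rightarrow> bool" where
  "magnetic_system SM phi KK \<longleftrightarrow>
     is_flow SM phi \<and>
     (\<exists>B. \<forall>v\<in>SM. \<bar>KK v\<bar> \<le> B) \<and>
     (\<forall>v\<in>SM. continuous_on UNIV (\<lambda>t. KK (phi t v)))"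

definition perp_jacobi ::
  "(real \<Rightarrow> 'v \<Rightarrow> 'v) \<Rightarrow> ('v \<Rightarrow> real) \<Rightarrow> 'v \<Rightarrow> (real \<Rightarrow> real) \<Rightarrow> (real \<Rightarrow> real) \<Rightarrow> bool" where
  "perp_jacobi phi KK v J J' \<longleftrightarrow>
     (\<forall>t. (J has_real_derivative J' t) (at t) \<and>
          (J' has_real_derivative (- KK (phi t v) * J t)) (at t))"

definition no_conjugate_points :: "'v set \<Rightarrow> (real \<Rightarrow> 'v \<Rightarrow> 'v) \<Rightarrow> ('v \<Rightarrow> real) \<Rightarrow> bool" where
  "no_conjugate_points SM phi KK \<longleftrightarrow>
     (\<forall>v\<in>SM. \<forall>J J'. perp_jacobi phi KK v J J' \<and> J 0 = 0 \<and> (\<exists>s. J s \<noteq> 0)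
        \<longrightarrow> (\<forall>t. t \<noteq> 0 \<longrightarrow> J t \<noteq> 0))"

end

theory Submission
  imports Defs
begin

lemma core:
  fixes J J' K :: "real \<Rightarrow> real" and B :: real
  assumes dJ: "\<And>t. (J has_real_derivative J' t) (at t)"
    and dJ': "\<And>t. (J' has_real_derivative (- K t * J t)) (at t)"
    and KB: "\<And>t. K t \<ge> -B" and B: "B \<ge> 0"
    and pos: "\<And>t. 0 \<le> t \<Longrightarrow> t \<le> 1 \<Longrightarrow> J t > 0"
  shows "J' 0 \<ge> -(2*(1+B)) * J 0"
proof (rule ccontr)
  assume neg: "\<not> ?thesis"
  define a where "a = 1/(1+B)"
  have a0: "0 < a" and a1: "a \<le> 1" using B by (auto simp: a_def field_simps)
  have ainv: "1/a = 1 + B" using B by (simp add: a_def)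
  define z where "z t = J 0 * (1 - t/a)^2" for t
  define z' where "z' t = -2 * J 0 * (1 - t/a)/a" for t
  define W where "W t = J t * z' t - J' t * z t" for t
  have J0: "J 0 > 0" using pos by simp
  have dz: "(z has_real_derivative z' t) (at t)" for t
    unfolding z_def z'_def using a0
    by (auto intro!: derivative_eq_intros simp: field_simps power2_eq_square)
  have dz': "(z' has_real_derivative 2*J 0/a^2) (at t)" for t
    unfolding z'_def using a0
    by (auto intro!: derivative_eq_intros simp: field_simps power2_eq_square)
  have dW: "(W has_real_derivative (J t * (2*J 0/a^2 + K t * z t))) (at t)" for t
    unfolding W_def
    by (auto intro!: derivative_eq_intros dJ dJ' dz dz' simp: algebra_simps)
  have W0: "W 0 > 0"
  proof -
    have "W 0 = J 0 * (- 2 * J 0 * (1/a) - J' 0)" by (simp add: W_def z_def z'_def algebra_simps)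
    also have "\<dots> > 0" using neg J0 ainv by (intro mult_pos_pos) (auto simp: algebra_simps)
    finally show ?thesis .
  qed
  have Wnn: "W t \<ge> 0" if "0 \<le> t" "t \<le> a" for t
  proof -
    have "W 0 \<le> W t"
    proof (rule DERIV_nonneg_imp_nondecreasing[OF that(1)])
      fix x assume x: "0 \<le> x" "x \<le> t"
      have Jx: "J x > 0" using pos x that a1 by auto
      have zx0: "z x \<ge> 0" using J0 by (simp add: z_def)
      have "(1 - x/a) \<ge> 0" "(1 - x/a) \<le> 1" using x that a0 by (auto simp: field_simps)
      then have "(1 - x/a)^2 \<le> 1" by (simp add: power_le_one)
      then have zx1: "z x \<le> J 0" using J0 by (simp add: z_def mult_left_le)
      have "K x * z x \<ge> -B * z x" using KB zx0 mult_right_mono by blast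
      also have "-B * z x \<ge> -B * J 0" using B zx1 by (simp add: mult_left_mono)
      finally have k: "K x * z x \<ge> -B * J 0" .
      have "2*J 0/a^2 = 2 * J 0 * (1+B)^2" 
      proof -
        have "2*J 0/a^2 = 2 * J 0 * (1/a)^2" by (simp add: power_divide)
        then show ?thesis using ainv by simp
      qed
      moreover have "2 * (1+B)^2 \<ge> B" using B by (simp add: power2_eq_square algebra_simps)
      moreover have "B * J 0 \<le> (2 * (1+B)^2) * J 0"
        using \<open>2 * (1+B)^2 \<ge> B\<close> J0 by (intro mult_right_mono) auto
      ultimately have "2*J 0/a^2 \<ge> B * J 0" by (simp add: algebra_simps)
      with k have "2*J 0/a^2 + K x * z x \<ge> 0" by linarith
      with Jx show "\<exists>y. DERIV W x :> y \<and> y \<ge> 0" using dW by (intro exI[of _ "J x * (2*J 0/a^2 + K x * z x)"]) auto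
    qed
    with W0 show ?thesis by linarith
  qed
  define f where "f t = z t / J t" for t
  have "f 0 \<le> f a"
  proof (rule DERIV_nonneg_imp_nondecreasing[OF less_imp_le[OF a0]])
    fix x assume x: "0 \<le> x" "x \<le> a"
    have Jx: "J x > 0" using pos x a1 by auto
    have "(f has_real_derivative (z' x * J x - z x * J' x) / (J x * J x)) (at x)"
      unfolding f_def[abs_def] using Jx
      by (intro DERIV_divide dz dJ) auto
    moreover have "(z' x * J x - z x * J' x) / (J x * J x) \<ge> 0"
      using Wnn[OF x] Jx by (simp add: W_def algebra_simps)
    ultimately show "\<exists>y. DERIV f x :> y \<and> y \<ge> 0" by blast
  qed
  moreover have "f 0 = 1" using J0 by (simp add: f_def z_def)
  moreover have "f a = 0" using a0 by (simp add: f_def z_def)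
  ultimately show False by simp
qed

lemma core2:
  fixes J J' K :: "real \<Rightarrow> real" and B :: real
  assumes dJ: "\<And>t. (J has_real_derivative J' t) (at t)"
    and dJ': "\<And>t. (J' has_real_derivative (- K t * J t)) (at t)"
    and KB: "\<And>t. K t \<ge> -B" and B: "B \<ge> 0"
    and nz: "\<And>t. 0 \<le> t \<Longrightarrow> t \<le> 1 \<Longrightarrow> J t \<noteq> 0"
  shows "J' 0 * J 0 \<ge> -(2*(1+B)) * (J 0)^2"
proof -
  have cont: "continuous_on {0..1} J"
    using dJ by (meson DERIV_continuous continuous_at_imp_continuous_on)
  consider "J 0 > 0" | "J 0 < 0" using nz[of 0] by linarith
  then show ?thesis
  proof cases
    case 1
    have pos: "J t > 0" if t0: "0 \<le> t" "t \<le> 1" for t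
    proof (rule ccontr)
      assume "\<not> J t > 0"
      have ct: "continuous_on {0..t} J" using that by (intro continuous_on_subset[OF cont]) auto
      obtain x where "0 \<le> x" "x \<le> t" "J x = 0"
        using IVT2'[of J t 0 0, OF _ _ _ ct] 1 t0 \<open>\<not> J t > 0\<close> by auto
      then show False using nz[of x] t0 by auto
    qed
    have "J' 0 \<ge> -(2*(1+B)) * J 0" by (rule core[OF dJ dJ' KB B pos])
    then have "J' 0 * J 0 \<ge> (-(2*(1+B)) * J 0) * J 0" using 1 by (intro mult_right_mono) auto
    then show ?thesis by (simp add: power2_eq_square algebra_simps)
  next
    case 2
    have pos: "- J t > 0" if t0: "0 \<le> t" "t \<le> 1" for t
    proof (rule ccontr)
      assume "\<not> - J t > 0"
      have ct: "continuous_on {0..t} J" using that by (intro continuous_on_subset[OF cont]) auto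
      obtain x where "0 \<le> x" "x \<le> t" "J x = 0"
        using IVT'[of J 0 0 t, OF _ _ _ ct] 2 t0 \<open>\<not> - J t > 0\<close> by auto
      then show False using nz[of x] t0 by auto
    qed
    have d1: "((\<lambda>t. - J t) has_real_derivative - J' t) (at t)" for t
      using dJ by (auto intro!: derivative_eq_intros)
    have d2: "((\<lambda>t. - J' t) has_real_derivative (- K t * (- J t))) (at t)" for t
      using dJ' by (auto intro!: derivative_eq_intros)
    have "- J' 0 \<ge> -(2*(1+B)) * (- J 0)"
      by (rule core[where J="\<lambda>t. - J t" and J'="\<lambda>t. - J' t", OF d1 d2 KB B pos])
    then have "(- J' 0) * (- J 0) \<ge> (-(2*(1+B)) * (- J 0)) * (- J 0)" using 2 by (intro mult_right_mono) auto
    then show ?thesis by (simp add: power2_eq_square algebra_simps)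
  qed
qed

lemma bound:
  fixes J J' K :: "real \<Rightarrow> real" and B :: real
  assumes dJ: "\<And>t. (J has_real_derivative J' t) (at t)"
    and dJ': "\<And>t. (J' has_real_derivative (- K t * J t)) (at t)"
    and KB: "\<And>t. K t \<ge> -B" and B: "B \<ge> 0"
    and nz: "\<And>t. -1 \<le> t \<Longrightarrow> t \<le> 1 \<Longrightarrow> J t \<noteq> 0"
  shows "\<bar>J' 0\<bar> \<le> (2*(1+B)) * \<bar>J 0\<bar>"
proof -
  have f: "J' 0 * J 0 \<ge> -(2*(1+B)) * (J 0)^2" by (rule core2[OF dJ dJ' KB B]) (use nz in auto)
  have d1: "((\<lambda>t. J (- t)) has_real_derivative - J' (- t)) (at t)" for t
  proof -
    have "((\<lambda>t. J (- t)) has_real_derivative J' (- t) * (-1)) (at t)"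
      by (rule DERIV_chain2[OF dJ]) (auto intro!: derivative_eq_intros)
    then show ?thesis by simp
  qed
  have d2: "((\<lambda>t. - J' (- t)) has_real_derivative (- K (- t) * J (- t))) (at t)" for t
  proof -
    have "((\<lambda>t. J' (- t)) has_real_derivative (- K (- t) * J (- t)) * (-1)) (at t)"
      by (rule DERIV_chain2[OF dJ']) (auto intro!: derivative_eq_intros)
    then have "((\<lambda>t. - J' (- t)) has_real_derivative - ((- K (- t) * J (- t)) * (-1))) (at t)"
      by (rule DERIV_minus)
    then show ?thesis by simp
  qed
  have b: "(- J' 0) * J 0 \<ge> -(2*(1+B)) * (J 0)^2"
    using core2[where J="\<lambda>t. J (- t)" and J'="\<lambda>t. - J' (- t)" and K="\<lambda>t. K (- t)", OF d1 d2 _ B] KB nz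
    by auto
  have J0: "J 0 \<noteq> 0" using nz by auto
  have "\<bar>J' 0\<bar> * \<bar>J 0\<bar> \<le> (2*(1+B)) * \<bar>J 0\<bar> * \<bar>J 0\<bar>"
  proof (cases "J' 0 * J 0 \<ge> 0")
    case True
    then show ?thesis using b by (simp add: abs_mult[symmetric] power2_eq_square algebra_simps)
  next
    case False
    then show ?thesis using f by (simp add: abs_mult[symmetric] power2_eq_square algebra_simps)
  qed
  then show ?thesis using J0 by simp
qed

theorem mainTheorem9:
  fixes SM :: "'v set" and phi :: "real \<Rightarrow> 'v \<Rightarrow> 'v" and KK :: "'v \<Rightarrow> real"
  assumes "magnetic_system SM phi KK"
    and "no_conjugate_points SM phi KK"
  shows "\<forall>v\<in>SM. \<exists>c>0. \<exists>r0::real. \<forall>J J' r.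
           perp_jacobi phi KK v J J' \<and> r \<ge> r0 \<and> J r = 0 \<longrightarrow> \<bar>J' 0\<bar> \<le> c * \<bar>J 0\<bar>"
proof
  fix v assume v: "v \<in> SM"
  have fl: "is_flow SM phi" using assms(1) by (simp add: magnetic_system_def)
  obtain B0 where B0: "\<forall>w\<in>SM. \<bar>KK w\<bar> \<le> B0" using assms(1) by (auto simp: magnetic_system_def)
  define B where "B = max B0 0"
  have B: "B \<ge> 0" by (simp add: B_def)
  have inSM: "phi t v \<in> SM" for t using fl v by (simp add: is_flow_def)
  have KB: "KK (phi t v) \<ge> -B" for t using B0 inSM[of t] by (auto simp: B_def)
  show "\<exists>c>0. \<exists>r0::real. \<forall>J J' r.
           perp_jacobi phi KK v J J' \<and> r \<ge> r0 \<and> J r = 0 \<longrightarrow> \<bar>J' 0\<bar> \<le> c * \<bar>J 0\<bar>"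
  proof (rule exI[of _ "2*(1+B)"], rule conjI)
    show "0 < 2*(1+B)" using B by simp
    show "\<exists>r0::real. \<forall>J J' r.
           perp_jacobi phi KK v J J' \<and> r \<ge> r0 \<and> J r = 0 \<longrightarrow> \<bar>J' 0\<bar> \<le> 2*(1+B) * \<bar>J 0\<bar>"
  proof (rule exI[of _ 2], intro allI impI)
    fix J J' r assume h: "perp_jacobi phi KK v J J' \<and> 2 \<le> r \<and> J r = 0"
    have dJ: "(J has_real_derivative J' t) (at t)" for t using h by (simp add: perp_jacobi_def)
    have dJ': "(J' has_real_derivative (- KK (phi t v) * J t)) (at t)" for t using h by (simp add: perp_jacobi_def)
    show "\<bar>J' 0\<bar> \<le> 2*(1+B) * \<bar>J 0\<bar>"
    proof (cases "\<forall>s. J s = 0")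
      case True
      then have "J = (\<lambda>_. 0)" by auto
      have c0: "((\<lambda>_. 0::real) has_real_derivative 0) (at 0)" by simp
      have "J' 0 = 0" using dJ[of 0] \<open>J = (\<lambda>_. 0)\<close> c0 DERIV_unique by metis
      then show ?thesis using B by simp
    next
      case False
      then obtain s where s: "J s \<noteq> 0" by auto
      define w where "w = phi r v"
      have w: "w \<in> SM" using inSM by (simp add: w_def)
      have pj: "perp_jacobi phi KK w (\<lambda>t. J (t + r)) (\<lambda>t. J' (t + r))"
        unfolding perp_jacobi_def
      proof
        fix t
        have e: "phi t w = phi (t + r) v" using fl v by (simp add: is_flow_def w_def)
        show "((\<lambda>t. J (t + r)) has_real_derivative J' (t + r)) (at t) \<and>
          ((\<lambda>t. J' (t + r)) has_real_derivative - KK (phi t w) * J (t + r)) (at t)"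
          using dJ[of "t + r"] dJ'[of "t + r"] unfolding e by (simp add: DERIV_shift)
      qed
      have ncp: "\<forall>t. t \<noteq> 0 \<longrightarrow> J (t + r) \<noteq> 0"
      proof -
        have "(\<lambda>t. J (t + r)) 0 = 0" using h by simp
        moreover have "\<exists>s'. (\<lambda>t. J (t + r)) s' \<noteq> 0" using s by (intro exI[of _ "s - r"]) simp
        ultimately show ?thesis
          using assms(2) w pj unfolding no_conjugate_points_def by blast
      qed
      have nz: "J t \<noteq> 0" if "-1 \<le> t" "t \<le> 1" for t
      proof -
        have "t - r \<noteq> 0" using that h by linarith
        then have "J ((t - r) + r) \<noteq> 0" using ncp by blast
        then show ?thesis by simp
      qed
      show ?thesis by (rule bound[OF dJ dJ' KB B nz])
    qed
  qed
  qed
qed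

end
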